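(* Suppose Assumption (A1) holds, and let $\{x_k\}_{k\in\mathbb N}$, $\{y_k\}_{k\in\mathbb N}$, $\{u_k\}_{k\in\mathbb N}$ be generated by Algorithm NFBHF-M from arbitrary $x_0,u_0\in\mathcal H$. Then for every $x^*\in\operatorname{zer}(A+B+C)$ and every integer $k\ge 1$, $$\Phi_{k+1}(x^* )\le \Phi_k(x^* )-\Big(1-L_{k-1}-L_k-2\gamma_kL_k\mu-\gamma_k^2\mu^2-\frac{\gamma_k\beta}{2}\Big)\|y_k-x_k\|_S^2 .$$
   Context: $\mathcal H$ is a real Hilbert space. $\mathcal P(\mathcal H)$ denotes the set of bounded linear operators $S:\mathcal H\to\mathcal H$ that are self-adjoint and strongly positive ($\langle Sx,x\rangle\ge m\|x\|^2$ for some $m>0$ and all $x$); for such $S$, $S^{-1}\in\mathcal P(\mathcal H)$, $\langle x,y\rangle_S:=\langle Sx,y\rangle$ and $\|x\|_S:=\sqrt{\langle Sx,x\rangle}$. For $S\in\mathcal P(\mathcal H)$, a single-valued $T:\mathcal H\to\mathcal H$ is $L$-Lipschitz continuous w.r.t. $S$ if $\|Tx-Ty\|_{S^{-1}}\le L\|x-y\|_S$ for all $x,y$, and is $\beta^{-1}$-cocoercive w.r.t. $S$ ($\beta>0$) if $\langle Tx-Ty,x-y\rangle\ge \beta^{-1}\|Tx-Ty\|_{S^{-1}}^2$ for all $x,y$. $\operatorname{zer}(A+B+C)=\{x\in\mathcal H: 0\in Ax+Bx+Cx\}$. Assumption (A1): fix $S\in\mathcal P(\mathcal H)$. (i) $A:\mathcal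 H\to2^{\mathcal H}$ is maximally monotone; (ii) $B:\mathcal H\to\mathcal H$ is single-valued, monotone and $\mu$-Lipschitz continuous w.r.t. $S$ ($\mu\ge0$); (iii) $C:\mathcal H\to\mathcal H$ is $\beta^{-1}$-cocoercive w.r.t. $S$ for some $\beta>0$; (iv) $\operatorname{zer}(A+B+C)\neq\emptyset$; (v) there is $\gamma>0$ and, for each $k\in\mathbb N$, a step-size $\gamma_k\ge\gamma$, a constant $L_k\in[0,1)$ and a (possibly nonlinear) operator $M_k:\mathcal H\to\mathcal H$ such that $\gamma_kM_k-S$ is $L_k$-Lipschitz continuous w.r.t. $S$. (Under (v), $M_k$ is maximally monotone and strongly monotone, so $(M_k+A)^{-1}$ is single-valued with full domain.) Algorithm NFBHF-M (nonlinear forward–backward–half forward with momentum): given $x_0,u_0\in\mathcal H$, for $k=0,1,2,\dots$ $$y_k=(M_k+A)^{-1}\big(M_kx_k-(B+C)x_k+\gamma_k^{-1}u_k\big),\quad x_{k+1}=y_k-\gamma_kS^{-1}By_k+\gamma_kS^{-1}Bx_k,\quad u_{k+1}=(\gamma_kM_k-S)y_k-(\gamma_kM_k-S)x_k.$$ For $x\in\mathcal H$ and $k\ge1$, $\Phi_k(x):=\|x_k-x\|_S^2+2\langle u_k,x_k-x\rangle+L_{k-1}\|y_{k-1}-x_{k-1}\|_S^2$. *)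

theory Defs
  imports "HOL-Analysis.Analysis"
begin

definition pos_op :: "('a::real_inner \<Rightarrow> 'a) \<Rightarrow> bool" where
  "pos_op S \<longleftrightarrow> bounded_linear S \<and> (\<forall>x y. inner (S x) y = inner x (S y))
     \<and> (\<exists>m>0. \<forall>x. inner (S x) x \<ge> m * (norm x)\<^sup>2)"

definition normS :: "('a::real_inner \<Rightarrow> 'a) \<Rightarrow> 'a \<Rightarrow> real" where
  "normS S x = sqrt (inner (S x) x)"

definition lipschitz_wrt :: "('a::real_inner \<Rightarrow> 'a) \<Rightarrow> real \<Rightarrow> ('a \<Rightarrow> 'a) \<Rightarrow> bool" where
  "lipschitz_wrt S L T \<longleftrightarrow> (\<forall>x y. normS (inv S) (T x - T y) \<le> L * normS S (x - y))"

definition cocoercive_wrt :: "('a::real_inner \<Rightarrow> 'a) \<Rightarrow> real \<Rightarrow> ('a \<Rightarrow> 'a) \<Rightarrow> bool" where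
  "cocoercive_wrt S \<beta> T \<longleftrightarrow>
     (\<forall>x y. inner (T x - T y) (x - y) \<ge> (1 / \<beta>) * (normS (inv S) (T x - T y))\<^sup>2)"

definition monotone_op :: "('a::real_inner \<Rightarrow> 'a set) \<Rightarrow> bool" where
  "monotone_op A \<longleftrightarrow> (\<forall>x y u v. u \<in> A x \<longrightarrow> v \<in> A y \<longrightarrow> inner (u - v) (x - y) \<ge> 0)"

definition maximal_monotone :: "('a::real_inner \<Rightarrow> 'a set) \<Rightarrow> bool" where
  "maximal_monotone A \<longleftrightarrow> monotone_op A \<and>
     (\<forall>x u. (\<forall>y v. v \<in> A y \<longrightarrow> inner (u - v) (x - y) \<ge> 0) \<longrightarrow> u \<in> A x)"

definition monotone_single :: "('a::real_inner \<Rightarrow> 'a) \<Rightarrow> bool" where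
  "monotone_single B \<longleftrightarrow> (\<forall>x y. inner (B x - B y) (x - y) \<ge> 0)"

definition zer3 :: "('a::real_vector \<Rightarrow> 'a set) \<Rightarrow> ('a \<Rightarrow> 'a) \<Rightarrow> ('a \<Rightarrow> 'a) \<Rightarrow> 'a set" where
  "zer3 A B C = {x. \<exists>a\<in>A x. a + B x + C x = 0}"

definition Phi :: "('a::real_inner \<Rightarrow> 'a) \<Rightarrow> (nat \<Rightarrow> 'a) \<Rightarrow> (nat \<Rightarrow> 'a) \<Rightarrow> (nat \<Rightarrow> 'a)
    \<Rightarrow> (nat \<Rightarrow> real) \<Rightarrow> nat \<Rightarrow> 'a \<Rightarrow> real" where
  "Phi S xs ys us L k x = (normS S (xs k - x))\<^sup>2 + 2 * inner (us k) (xs k - x)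
      + L (k - 1) * (normS S (ys (k - 1) - xs (k - 1)))\<^sup>2"

end

theory Submission imports Defs begin

lemma alg_aux: fixes K m a :: real assumes "K > 0"
  shows "a\<^sup>2 - 2 * (m / K\<^sup>2) * (m * a\<^sup>2) + (m / K\<^sup>2)\<^sup>2 * (a * K)\<^sup>2 = (1 - m\<^sup>2 / K\<^sup>2) * a\<^sup>2"
proof -
  have "(m / K\<^sup>2)\<^sup>2 * (a * K)\<^sup>2 = m\<^sup>2 / K\<^sup>2 * a\<^sup>2" using assms by (simp add: power_mult_distrib power_divide power2_eq_square)
  then show ?thesis by (simp add: algebra_simps power2_eq_square)
qed

lemma half_aux: "(a::real) = (b + c - d) / 2 \<Longrightarrow> d = b + c - 2 * a" by simp

lemma pos_op_surj:
  fixes S :: "'a::{real_inner, complete_space} \<Rightarrow> 'a"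
  assumes S: "pos_op S"
  shows "surj S"
proof -
  have bl: "bounded_linear S" and co: "\<exists>m>0. \<forall>x. inner (S x) x \<ge> m * (norm x)\<^sup>2"
    using S unfolding pos_op_def by auto
  obtain m where m: "m > 0" "\<And>x. inner (S x) x \<ge> m * (norm x)\<^sup>2" using co by auto
  obtain K0 where K0: "K0 > 0" "\<And>x. norm (S x) \<le> norm x * K0"
    using bounded_linear.pos_bounded[OF bl] by auto
  define K where "K = max K0 m"
  have K3: "norm (S x) \<le> norm x * K" for x
  proof -
    have "norm x * K0 \<le> norm x * K" unfolding K_def by (intro mult_left_mono) auto
    then show ?thesis using K0(2)[of x] by linarith
  qed
  have K: "K > 0" "K \<ge> m" "\<And>x. norm (S x) \<le> norm x * K"
    unfolding K_def using K0 m K3 by (auto simp: K_def)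
  define t where "t = m / K\<^sup>2"
  have t: "t > 0" using m K unfolding t_def by auto
  define c where "c = sqrt (1 - m\<^sup>2 / K\<^sup>2)"
  have mK: "m\<^sup>2 / K\<^sup>2 \<le> 1" using K m by (simp add: power_mono)
  have c2: "c\<^sup>2 = 1 - m\<^sup>2 / K\<^sup>2" unfolding c_def using mK by simp
  have c0: "0 \<le> c" unfolding c_def using mK by auto
  have c1: "c < 1" unfolding c_def using m K by simp
  have lin: "linear S" using bl bounded_linear.linear by auto
  have "\<exists>x. b = S x" for b
  proof -
    define f where "f x = x - t *\<^sub>R (S x - b)" for x
    have contr: "\<forall>x y. dist (f x) (f y) \<le> c * dist x y"
    proof (intro allI)
      fix x y :: 'a
      define z where "z = x - y"
      have fz: "f x - f y = z - t *\<^sub>R S z"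
        unfolding f_def z_def linear_diff[OF lin] by (simp add: algebra_simps)
      have "(norm (z - t *\<^sub>R S z))\<^sup>2 = (norm z)\<^sup>2 - 2 * t * inner (S z) z + t\<^sup>2 * (norm (S z))\<^sup>2"
      proof -
          have "inner z (t *\<^sub>R S z) = t * inner (S z) z" by (simp add: inner_commute)
          moreover have "(norm (t *\<^sub>R S z))\<^sup>2 = t\<^sup>2 * (norm (S z))\<^sup>2" by (simp add: power_mult_distrib)
          moreover have "(norm (z - t *\<^sub>R S z))\<^sup>2 = (norm z)\<^sup>2 + (norm (t *\<^sub>R S z))\<^sup>2 - 2 * inner z (t *\<^sub>R S z)"
            by (rule half_aux[OF dot_norm_neg[of z "t *\<^sub>R S z"]])
          ultimately show ?thesis by (simp only:)
        qed
      also have "\<dots> \<le> (norm z)\<^sup>2 - 2 * t * (m * (norm z)\<^sup>2) + t\<^sup>2 * (norm z * K)\<^sup>2"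
      proof -
        have "2 * t * (m * (norm z)\<^sup>2) \<le> 2 * t * inner (S z) z"
          using m(2)[of z] t by (intro mult_left_mono) auto
        moreover have "(norm (S z))\<^sup>2 \<le> (norm z * K)\<^sup>2"
          using K(3)[of z] by (intro power_mono) auto
        then have "t\<^sup>2 * (norm (S z))\<^sup>2 \<le> t\<^sup>2 * (norm z * K)\<^sup>2"
          by (intro mult_left_mono) auto
        ultimately show ?thesis by linarith
      qed
      also have "\<dots> = (1 - m\<^sup>2 / K\<^sup>2) * (norm z)\<^sup>2"
        unfolding t_def by (rule alg_aux[OF K(1)])
      also have "\<dots> = (c * norm z)\<^sup>2"
        by (simp only: c2[symmetric] power_mult_distrib)
      finally have "(norm (z - t *\<^sub>R S z))\<^sup>2 \<le> (c * norm z)\<^sup>2" .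
      then have "norm (z - t *\<^sub>R S z) \<le> c * norm z"
        using c0 by (meson power2_le_imp_le mult_nonneg_nonneg norm_ge_zero)
      moreover have "dist (f x) (f y) = norm (z - t *\<^sub>R S z)" using fz by (simp add: dist_norm)
      moreover have "dist x y = norm z" by (simp add: dist_norm z_def)
      ultimately show "dist (f x) (f y) \<le> c * dist x y" by simp
    qed
    obtain x :: 'a where "f x = x" using banach_fix_type[OF c0 c1 contr] by auto
    then have "t *\<^sub>R (S x - b) = 0" unfolding f_def by simp
    then have "S x = b" using t by simp
    then show ?thesis by metis
  qed
  then show ?thesis unfolding surj_def by blast
qed

context
  fixes S :: "'a::{real_inner, complete_space} \<Rightarrow> 'a"
  assumes S: "pos_op S"
begin

lemma S_lin: "linear S" using S unfolding pos_op_def by (auto intro: bounded_linear.linear)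
lemma S_sym: "inner (S x) y = inner x (S y)" using S unfolding pos_op_def by auto
lemma S_psd: "inner (S x) x \<ge> 0"
proof -
  obtain m where "m > 0" "\<And>x. inner (S x) x \<ge> m * (norm x)\<^sup>2" using S unfolding pos_op_def by auto
  then show ?thesis by (meson order_trans mult_nonneg_nonneg less_imp_le zero_le_power2)
qed
lemma S_inj: "inj S"
proof -
  obtain m where m: "m > 0" "\<And>x. inner (S x) x \<ge> m * (norm x)\<^sup>2" using S unfolding pos_op_def by auto
  have "x = 0" if "S x = 0" for x
    using m(2)[of x] that m(1) by (simp add: mult_le_0_iff)
  then show ?thesis using linear_inj_iff_eq_0[OF S_lin] by blast
qed
lemma ST: "S (inv S w) = w" using pos_op_surj[OF S] by (simp add: surj_f_inv_f)
lemma TS: "inv S (S w) = w" using S_inj by (simp add: inv_f_f)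
lemma S_diff: "S (a - b) = S a - S b" using linear_diff[OF S_lin] .
lemma S_add: "S (a + b) = S a + S b" using linear_add[OF S_lin] .
lemma S_scale: "S (r *\<^sub>R a) = r *\<^sub>R S a" using linear_scale[OF S_lin] .
lemma T_diff: "inv S a - inv S b = inv S (a - b)"
proof -
  have "S (inv S a - inv S b) = S (inv S (a - b))" by (simp add: S_diff ST)
  then show ?thesis using S_inj by (simp add: inj_eq)
qed
lemma normS_sq: "(normS S v)\<^sup>2 = inner (S v) v" unfolding normS_def using S_psd by simp
lemma T_psd: "inner (inv S w) w \<ge> 0"
  using S_psd[of "inv S w"] by (simp add: ST inner_commute)
lemma normT_sq: "(normS (inv S) w)\<^sup>2 = inner (inv S w) w" unfolding normS_def using T_psd by simp
lemma normT_nn: "normS (inv S) w \<ge> 0" unfolding normS_def using T_psd by simp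
lemma normS_nn: "normS S w \<ge> 0" unfolding normS_def using S_psd by simp
lemma normST: "normS S (inv S w) = normS (inv S) w" unfolding normS_def by (simp add: ST inner_commute)

lemma quad: "inner (S (p - t *\<^sub>R q)) (p - t *\<^sub>R q) = inner (S p) p - 2 * t * inner (S p) q + t\<^sup>2 * inner (S q) q"
proof -
  have "inner (S q) p = inner (S p) q" by (metis S_sym inner_commute)
  then show ?thesis by (simp add: S_diff S_scale inner_diff_left inner_diff_right power2_eq_square algebra_simps)
qed

lemma CS_sq: "(inner (S p) q)\<^sup>2 \<le> inner (S p) p * inner (S q) q"
proof (cases "inner (S q) q > 0")
  case True
  define t where "t = inner (S p) q / inner (S q) q"
  have "0 \<le> inner (S p) p - 2 * t * inner (S p) q + t\<^sup>2 * inner (S q) q"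
    using S_psd[of "p - t *\<^sub>R q"] quad by simp
  also have "\<dots> = inner (S p) p - (inner (S p) q)\<^sup>2 / inner (S q) q"
    unfolding t_def using True by (simp add: field_simps power2_eq_square)
  finally show ?thesis using True by (simp add: field_simps)
next
  case False
  then have q0: "inner (S q) q = 0" using S_psd[of q] by linarith
  show ?thesis
  proof (rule ccontr)
    assume "\<not> ?thesis"
    then have ne: "inner (S p) q \<noteq> 0" using q0 by simp
    define t where "t = (inner (S p) p + 1) / (2 * inner (S p) q)"
    have "0 \<le> inner (S p) p - 2 * t * inner (S p) q + t\<^sup>2 * inner (S q) q"
      using S_psd[of "p - t *\<^sub>R q"] quad by simp
    also have "\<dots> = -1" unfolding t_def using q0 ne by (simp add: field_simps)
    finally show False by simp
  qed
qed

lemma CS: "\<bar>inner (S p) q\<bar> \<le> normS S p * normS S q"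
proof -
  have "\<bar>inner (S p) q\<bar> = sqrt ((inner (S p) q)\<^sup>2)" by simp
  also have "\<dots> \<le> sqrt (inner (S p) p * inner (S q) q)" using CS_sq by (rule real_sqrt_le_mono)
  also have "\<dots> = normS S p * normS S q" unfolding normS_def by (simp add: real_sqrt_mult)
  finally show ?thesis .
qed

end
theorem lemma3p1:
  fixes S :: "'a::{real_inner, complete_space} \<Rightarrow> 'a"
    and A :: "'a \<Rightarrow> 'a set" and B C :: "'a \<Rightarrow> 'a"
    and \<mu> \<beta> \<gamma> :: real
    and \<gamma>s Ls :: "nat \<Rightarrow> real" and M :: "nat \<Rightarrow> 'a \<Rightarrow> 'a"
    and x y u :: "nat \<Rightarrow> 'a" and xstar :: 'a and k :: nat
  assumes S: "pos_op S"
    and A: "maximal_monotone A"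
    and B_mono: "monotone_single B" and mu: "\<mu> \<ge> 0" and B_lip: "lipschitz_wrt S \<mu> B"
    and beta: "\<beta> > 0" and C: "cocoercive_wrt S \<beta> C"
    and zer_ne: "zer3 A B C \<noteq> {}"
    and gamma: "\<gamma> > 0" and gammas: "\<And>j. \<gamma>s j \<ge> \<gamma>"
    and Ls: "\<And>j. 0 \<le> Ls j \<and> Ls j < 1"
    and M: "\<And>j. lipschitz_wrt S (Ls j) (\<lambda>z. \<gamma>s j *\<^sub>R M j z - S z)"
    and y_step: "\<And>j. M j (x j) - (B (x j) + C (x j)) + (1 / \<gamma>s j) *\<^sub>R u j - M j (y j) \<in> A (y j)"
    and x_step: "\<And>j. x (Suc j) = y j - \<gamma>s j *\<^sub>R inv S (B (y j)) + \<gamma>s j *\<^sub>R inv S (B (x j))"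
    and u_step: "\<And>j. u (Suc j) = (\<gamma>s j *\<^sub>R M j (y j) - S (y j)) - (\<gamma>s j *\<^sub>R M j (x j) - S (x j))"
    and xstar: "xstar \<in> zer3 A B C"
    and k: "k \<ge> 1"
  shows "Phi S x y u Ls (Suc k) xstar \<le> Phi S x y u Ls k xstar
     - (1 - Ls (k - 1) - Ls k - 2 * \<gamma>s k * Ls k * \<mu> - (\<gamma>s k)\<^sup>2 * \<mu>\<^sup>2 - \<gamma>s k * \<beta> / 2)
       * (normS S (y k - x k))\<^sup>2"
proof -
  obtain j where kj: "k = Suc j" using k by (cases k) auto
  define g where "g = \<gamma>s k"
  define T where "T = inv S"
  define d where "d = y k - x k"
  define e where "e = y k - xstar"
  define b where "b = B (y k) - B (x k)"
  define c where "c = C (x k) - C xstar"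
  define d0 where "d0 = y j - x j"
  define Nd where "Nd = inner (S d) d"
  define Nd0 where "Nd0 = inner (S d0) d0"
  define Ne where "Ne = inner (S e) e"
  define Nx where "Nx = inner (S (x k - xstar)) (x k - xstar)"
  define Nx1 where "Nx1 = inner (S (x (Suc k) - xstar)) (x (Suc k) - xstar)"
  define Nb where "Nb = inner (T b) b"
  define Nc where "Nc = inner (T c) c"
  have g: "g > 0" unfolding g_def using gamma gammas[of k] by linarith
  have Lk: "0 \<le> Ls k" "0 \<le> Ls j" using Ls by auto
  obtain as where as: "as \<in> A xstar" "as + B xstar + C xstar = 0"
    using xstar unfolding zer3_def by auto
  define ak where "ak = M k (x k) - (B (x k) + C (x k)) + (1 / \<gamma>s k) *\<^sub>R u k - M k (y k)"
  have ak: "ak \<in> A (y k)" unfolding ak_def using y_step .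
  have monoA: "inner (ak - as) (y k - xstar) \<ge> 0"
    using A ak as(1) unfolding maximal_monotone_def monotone_op_def by blast
  have as_eq: "as = - B xstar - C xstar" using as(2) by (simp add: algebra_simps eq_neg_iff_add_eq_0)
  have gak: "g *\<^sub>R (ak - as) = u k - u (Suc k) - S d - g *\<^sub>R (B (x k) - B xstar) - g *\<^sub>R c"
    unfolding ak_def as_eq u_step d_def c_def g_def
    using g unfolding g_def by (simp add: S_diff[OF S] algebra_simps)
  have F1: "0 \<le> inner (u k) e - inner (u (Suc k)) e - inner (S d) e - g * inner (B (x k) - B xstar) e - g * inner c e"
  proof -
    have "0 \<le> g * inner (ak - as) e" using monoA g unfolding e_def by simp
    also have "\<dots> = inner (g *\<^sub>R (ak - as)) e" by simp
    also have "\<dots> = inner (u k) e - inner (u (Suc k)) e - inner (S d) e - g * inner (B (x k) - B xstar) e - g * inner c e"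
      unfolding gak by (simp add: inner_diff_left)
    finally show ?thesis .
  qed
  have symS: "\<And>p q. inner (S p) q = inner (S q) p" by (metis S_sym[OF S] inner_commute)
  have F2: "Nx = Ne - 2 * inner (S d) e + Nd"
  proof -
    have "x k - xstar = e - 1 *\<^sub>R d" unfolding e_def d_def by simp
    then show ?thesis unfolding Nx_def Ne_def Nd_def using quad[OF S, of e 1 d] symS[of e d] by simp
  qed
  have F3: "inner (B (x k) - B xstar) e = inner (B (y k) - B xstar) e - inner b e"
    unfolding b_def by (simp add: inner_diff_left)
  have F3b: "inner (B (y k) - B xstar) e \<ge> 0" using B_mono unfolding monotone_single_def e_def by blast
  have x1: "x (Suc k) - xstar = e - g *\<^sub>R T b"
    unfolding x_step e_def g_def T_def b_def by (simp add: T_diff[OF S, symmetric] algebra_simps)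
  have F4: "Nx1 = Ne - 2 * (g * inner b e) + g\<^sup>2 * Nb"
  proof -
    have "inner (S e) (T b) = inner b e" unfolding T_def using symS[of e "inv S b"] by (simp add: ST[OF S] inner_commute)
    moreover have "inner (S (T b)) (T b) = Nb" unfolding Nb_def T_def by (simp add: ST[OF S] inner_commute)
    ultimately show ?thesis unfolding Nx1_def x1 Ne_def using quad[OF S, of e g "T b"] by simp
  qed
  have F5: "Nb \<le> \<mu>\<^sup>2 * Nd"
  proof -
    have "normS T b \<le> \<mu> * normS S d" using B_lip unfolding lipschitz_wrt_def T_def b_def d_def by blast
    then have "(normS T b)\<^sup>2 \<le> (\<mu> * normS S d)\<^sup>2"
      using normT_nn[OF S, of b] unfolding T_def by (intro power_mono) auto
    then show ?thesis unfolding Nb_def Nd_def T_def by (simp add: normT_sq[OF S] normS_sq[OF S] power_mult_distrib)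
  qed
  have F6: "inner c (x k - xstar) \<ge> Nc / \<beta>"
    using C unfolding cocoercive_wrt_def Nc_def T_def c_def by (simp add: normT_sq[OF S])
  have F6b: "inner c e = inner c (x k - xstar) + inner c d"
    unfolding e_def d_def by (simp add: inner_diff_right)
  have F7: "0 \<le> Nc + \<beta> * inner c d + \<beta>\<^sup>2 / 4 * Nd"
  proof -
    have "0 \<le> inner (S (T c - (- \<beta> / 2) *\<^sub>R d)) (T c - (- \<beta> / 2) *\<^sub>R d)" by (rule S_psd[OF S])
    also have "\<dots> = inner (S (T c)) (T c) - 2 * (- \<beta> / 2) * inner (S (T c)) d + (- \<beta> / 2)\<^sup>2 * Nd"
      unfolding Nd_def by (rule quad[OF S])
    also have "\<dots> = Nc + \<beta> * inner c d + \<beta>\<^sup>2 / 4 * Nd"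
      unfolding Nc_def T_def by (simp add: ST[OF S] inner_commute power2_eq_square)
    finally show ?thesis .
  qed
  have F7b: "- 2 * (g * inner c e) \<le> g * \<beta> / 2 * Nd"
  proof -
    have "\<beta> * inner c e \<ge> - (\<beta>\<^sup>2 / 4 * Nd)"
    proof -
      have "\<beta> * inner c (x k - xstar) \<ge> Nc" using F6 beta by (simp add: field_simps)
      moreover have "\<beta> * inner c e = \<beta> * inner c (x k - xstar) + \<beta> * inner c d"
        unfolding F6b by (simp add: distrib_left)
      ultimately show ?thesis using F7 by linarith
    qed
    moreover have "\<beta> * (- (\<beta> / 4 * Nd)) = - (\<beta>\<^sup>2 / 4 * Nd)" by (simp add: power2_eq_square)
    ultimately have "\<beta> * (- (\<beta> / 4 * Nd)) \<le> \<beta> * inner c e" by (simp only:)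
    then have "inner c e \<ge> - (\<beta> / 4 * Nd)" using beta by (rule mult_left_le_imp_le)
    then have "g * inner c e \<ge> g * (- (\<beta> / 4 * Nd))" using g by (intro mult_left_mono) auto
    then show ?thesis by (simp add: algebra_simps)
  qed
  have nd: "(normS S d)\<^sup>2 = Nd" unfolding Nd_def by (rule normS_sq[OF S])
  have nd0: "(normS S d0)\<^sup>2 = Nd0" unfolding Nd0_def by (rule normS_sq[OF S])
  have ndpos: "normS S d \<ge> 0" "normS S d0 \<ge> 0" by (rule normS_nn[OF S])+
  have F9: "- 2 * (g * inner (u (Suc k)) (T b)) \<le> 2 * g * (Ls k * \<mu> * Nd)"
  proof -
    have u1: "normS T (u (Suc k)) \<le> Ls k * normS S d"
      using M[of k] unfolding lipschitz_wrt_def T_def d_def u_step by blast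
    have b1: "normS T b \<le> \<mu> * normS S d" using B_lip unfolding lipschitz_wrt_def T_def b_def d_def by blast
    have "\<bar>inner (u (Suc k)) (T b)\<bar> = \<bar>inner (S (T (u (Suc k)))) (T b)\<bar>" unfolding T_def by (simp add: ST[OF S])
    also have "\<dots> \<le> normS S (T (u (Suc k))) * normS S (T b)" by (rule CS[OF S])
    also have "\<dots> = normS T (u (Suc k)) * normS T b" unfolding T_def by (simp add: normST[OF S])
    also have "\<dots> \<le> (Ls k * normS S d) * (\<mu> * normS S d)"
      using u1 b1 normT_nn[OF S] normS_nn[OF S] Lk unfolding T_def by (intro mult_mono) auto
    also have "\<dots> = Ls k * \<mu> * Nd" by (simp add: nd[symmetric] power2_eq_square)
    finally have "- inner (u (Suc k)) (T b) \<le> Ls k * \<mu> * Nd" by linarith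
    then have "g * (- inner (u (Suc k)) (T b)) \<le> g * (Ls k * \<mu> * Nd)" by (rule mult_left_mono) (use g in auto)
    moreover have "g * (- inner (u (Suc k)) (T b)) = - (g * inner (u (Suc k)) (T b))" by simp
    moreover have "2 * g * (Ls k * \<mu> * Nd) = 2 * (g * (Ls k * \<mu> * Nd))" by simp
    ultimately show ?thesis by linarith
  qed
  have F10: "2 * inner (u k) d \<le> Ls j * Nd0 + Ls j * Nd"
  proof -
    have u0: "normS T (u k) \<le> Ls j * normS S d0"
      using M[of j] unfolding lipschitz_wrt_def T_def d0_def kj u_step by blast
    have "inner (u k) d = inner (S (T (u k))) d" unfolding T_def by (simp add: ST[OF S])
    also have "\<dots> \<le> normS S (T (u k)) * normS S d" using CS[OF S, of "T (u k)" d] by linarith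
    also have "\<dots> = normS T (u k) * normS S d" unfolding T_def by (simp add: normST[OF S])
    also have "\<dots> \<le> (Ls j * normS S d0) * normS S d" using u0 ndpos by (intro mult_right_mono) auto
    finally have "2 * inner (u k) d \<le> Ls j * (2 * normS S d0 * normS S d)" by (simp add: algebra_simps)
    also have "\<dots> \<le> Ls j * (Nd0 + Nd)"
    proof -
      have "2 * normS S d0 * normS S d \<le> (normS S d0)\<^sup>2 + (normS S d)\<^sup>2"
        using sum_squares_bound[of "normS S d0" "normS S d"] by (simp add: algebra_simps)
      then show ?thesis using Lk(2) nd nd0 by (intro mult_left_mono) auto
    qed
    finally show ?thesis by (simp add: algebra_simps)
  qed
  have F8: "inner (u (Suc k)) (x (Suc k) - xstar) = inner (u (Suc k)) e - g * inner (u (Suc k)) (T b)"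
    unfolding x1 by (simp add: inner_diff_right)
  have F8b: "inner (u k) (x k - xstar) = inner (u k) e - inner (u k) d"
    unfolding e_def d_def by (simp add: inner_diff_right)
  have P1: "g\<^sup>2 * Nb \<le> g\<^sup>2 * (\<mu>\<^sup>2 * Nd)" using F5 by (intro mult_left_mono) auto
  have F1b: "g * inner (B (x k) - B xstar) e \<ge> - (g * inner b e)"
  proof -
    have "g * inner (B (x k) - B xstar) e = g * inner (B (y k) - B xstar) e - g * inner b e"
      unfolding F3 by (simp add: right_diff_distrib)
    moreover have "g * inner (B (y k) - B xstar) e \<ge> 0" using F3b g by simp
    ultimately show ?thesis by linarith
  qed
  have PhiS: "Phi S x y u Ls (Suc k) xstar = Nx1 + 2 * inner (u (Suc k)) (x (Suc k) - xstar) + Ls k * Nd"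
    unfolding Phi_def Nx1_def Nd_def d_def by (simp add: normS_sq[OF S])
  have Phik: "Phi S x y u Ls k xstar = Nx + 2 * inner (u k) (x k - xstar) + Ls j * Nd0"
    unfolding Phi_def Nx_def Nd0_def d0_def kj by (simp add: normS_sq[OF S])
  have km1: "k - 1 = j" using kj by simp
  have expand: "(1 - Ls (k - 1) - Ls k - 2 * \<gamma>s k * Ls k * \<mu> - (\<gamma>s k)\<^sup>2 * \<mu>\<^sup>2 - \<gamma>s k * \<beta> / 2) * (normS S (y k - x k))\<^sup>2
      = Nd - Ls j * Nd - Ls k * Nd - 2 * g * (Ls k * \<mu> * Nd) - g\<^sup>2 * (\<mu>\<^sup>2 * Nd) - g * \<beta> / 2 * Nd"
    unfolding km1 nd[unfolded d_def] g_def[symmetric] by (simp add: algebra_simps)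
  show ?thesis unfolding PhiS Phik expand F8 F8b
    using F1 F2 F4 F1b P1 F7b F9 F10 by argo
qed
end
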